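(* Let $n=2r+1$, let $\pi$ be an irreducible generic unitarizable representation of $G_n$, and let $W_{v_m}$ be its normalized Howe vector of level $m$. Let $$g=\begin{pmatrix}0&a\\ b\omega_r&0\end{pmatrix}\begin{pmatrix}u_r&0&u_r\omega_ra'u\\0&1&0\\0&0&I_r\end{pmatrix},$$ where $a=\mathrm{diag}(a_1,\dots,a_{r+1})\in A_{r+1}$, $a'=\mathrm{diag}(a'_1,\dots,a'_r)\in A_r$, $b=\mathrm{diag}(b_1,\dots,b_r)\in A_r$, $u_r\in N_r$, $u\in N_r$ (the first factor has block sizes with $a$ in the upper right $(r+1)\times(r+1)$ position and $b\omega_r$ in the lower left $r\times r$ position). If $W_{v_m}(g)\ne0$, then $a_i/a_{i+1}\in1+\mathfrak p^m$ for $i=1,\dots,r$, the matrix $\begin{pmatrix}I_r&0&\omega_ra'u\\0&1&0\\0&0&I_r\end{pmatrix}$ lies in $J_{n,m}$, and $$W_{v_m}(g)=W_{v_m}\left(\begin{pmatrix}0&a\\ b\omega_r&0\end{pmatrix}\begin{pmatrix}u_r&0&0\\0&1&0\\0&0&I_r\end{pmatrix}\right).$$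
   Context: $F$ is a $p$-adic field, $\mathcal O$ its ring of integers, $\mathfrak p$ its maximal ideal, $\varpi$ a uniformizer; $\psi$ is a nontrivial additive character with conductor $\mathcal O$, extended to $N_n$ (upper triangular unipotent) by $\psi(u)=\psi(\sum u_{i,i+1})$. $A_k$ denotes diagonal matrices in $G_k=GL_k(F)$, $N_k$ upper triangular unipotent matrices, $\omega_k$ the $k\times k$ antidiagonal permutation matrix. Howe vectors: $K_n^m=I_n+M_n(\mathfrak p^m)$, $d=\mathrm{diag}(1,\varpi^2,\dots,\varpi^{2n-2})$, $J_{n,m}=d^mK_n^md^{-m}$, $N_{n,m}=N_n\cap J_{n,m}$, $\bar B_{n,m}=\bar B_n\cap J_{n,m}$ ($\bar B_n$ lower triangular Borel); $J_{n,m}=\bar B_{n,m}N_{n,m}$ and for $j=\bar b_jn_j$ put $\psi_m(j)=\psi(n_j)$. The normalized Howe vector of level $m$ is the unique (for $m$ large) $W_{v_m}\in\mathcal W(\pi,\psi)$ with $W_{v_m}(gj)=\psi_m(j)W_{v_m}(g)$ for all $g\in G_n$, $j\in J_{n,m}$, and $W_{v_m}(I_n)=1$. *)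

theory Defs
  imports Complex_Main "Jordan_Normal_Form.Matrix" "Jordan_Normal_Form.Determinant"
begin

text \<open>v is the normalized valuation on F (only its values at nonzero elements matter).
  pideal v k is the fractional ideal p^k = {x. x = 0 or v x >= k}; O = p^0.\<close>

definition pideal :: "('a::field \<Rightarrow> int) \<Rightarrow> int \<Rightarrow> 'a set" where
  "pideal v k = {x. x = 0 \<or> k \<le> v x}"

definition padic_field :: "('a::field \<Rightarrow> int) \<Rightarrow> bool" where
  "padic_field v \<longleftrightarrow>
     (\<forall>x y. x \<noteq> 0 \<longrightarrow> y \<noteq> 0 \<longrightarrow> v (x * y) = v x + v y) \<and>
     (\<forall>x y. x \<noteq> 0 \<longrightarrow> y \<noteq> 0 \<longrightarrow> x + y \<noteq> 0 \<longrightarrow> min (v x) (v y) \<le> v (x + y)) \<and>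
     (\<exists>w. w \<noteq> 0 \<and> v w = 1) \<and>
     (\<exists>S. finite S \<and> (\<forall>x\<in>pideal v 0. \<exists>s\<in>S. x - s \<in> pideal v 1)) \<and>
     (\<forall>X::nat \<Rightarrow> 'a. (\<forall>k. \<exists>N. \<forall>i\<ge>N. \<forall>j\<ge>N. X i - X j \<in> pideal v k) \<longrightarrow>
         (\<exists>L. \<forall>k. \<exists>N. \<forall>i\<ge>N. X i - L \<in> pideal v k)) \<and>
     (\<forall>n::nat. n > 0 \<longrightarrow> (of_nat n :: 'a) \<noteq> 0)"

definition add_char_conductor_O :: "('a::field \<Rightarrow> int) \<Rightarrow> ('a \<Rightarrow> complex) \<Rightarrow> bool" where
  "add_char_conductor_O v \<psi> \<longleftrightarrow>
     (\<forall>x y. \<psi> (x + y) = \<psi> x * \<psi> y) \<and> (\<forall>x. cmod (\<psi> x) = 1) \<and>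
     (\<forall>x\<in>pideal v 0. \<psi> x = 1) \<and> (\<exists>x\<in>pideal v (-1). \<psi> x \<noteq> 1)"

section \<open>Matrix groups (0-based indices)\<close>

definition GL :: "nat \<Rightarrow> 'a::field mat set" where
  "GL n = {g \<in> carrier_mat n n. det g \<noteq> 0}"

definition upper_uni :: "nat \<Rightarrow> 'a::field mat set" where
  "upper_uni n = {u \<in> carrier_mat n n. (\<forall>i<n. u $$ (i,i) = 1) \<and> (\<forall>i<n. \<forall>j<i. u $$ (i,j) = 0)}"

definition lower_borel :: "nat \<Rightarrow> 'a::field mat set" where
  "lower_borel n = {b \<in> carrier_mat n n. (\<forall>i<n. b $$ (i,i) \<noteq> 0) \<and> (\<forall>j<n. \<forall>i<j. b $$ (i,j) = 0)}"

definition diagm :: "nat \<Rightarrow> (nat \<Rightarrow> 'a::field) \<Rightarrow> 'a mat" where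
  "diagm k f = mat k k (\<lambda>(i,j). if i = j then f i else 0)"

definition diag_torus :: "nat \<Rightarrow> 'a::field mat set" where
  "diag_torus k = {diagm k f | f. \<forall>i<k. f i \<noteq> 0}"

definition omega :: "nat \<Rightarrow> 'a::field mat" where
  "omega k = mat k k (\<lambda>(i,j). if i + j = k - 1 then 1 else 0)"

definition psiN :: "('a::field \<Rightarrow> complex) \<Rightarrow> nat \<Rightarrow> 'a mat \<Rightarrow> complex" where
  "psiN \<psi> n u = \<psi> (\<Sum>i<n - 1. u $$ (i, Suc i))"

definition Kcong :: "('a::field \<Rightarrow> int) \<Rightarrow> nat \<Rightarrow> nat \<Rightarrow> 'a mat set" where
  "Kcong v n m = {k \<in> carrier_mat n n.
      \<forall>i<n. \<forall>j<n. k $$ (i,j) - (if i = j then 1 else 0) \<in> pideal v (int m)}"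

text \<open>J_{n,m} = d^m K_n^m d^{-m}, d = diag(1, w^2, ..., w^{2n-2}), w a uniformizer.\<close>
definition Jgrp :: "('a::field \<Rightarrow> int) \<Rightarrow> 'a \<Rightarrow> nat \<Rightarrow> nat \<Rightarrow> 'a mat set" where
  "Jgrp v w n m = {diagm n (\<lambda>i. w ^ (2 * i * m)) * k * diagm n (\<lambda>i. inverse (w ^ (2 * i * m)))
                   | k. k \<in> Kcong v n m}"

definition Nm :: "('a::field \<Rightarrow> int) \<Rightarrow> 'a \<Rightarrow> nat \<Rightarrow> nat \<Rightarrow> 'a mat set" where
  "Nm v w n m = upper_uni n \<inter> Jgrp v w n m"

definition Bbarm :: "('a::field \<Rightarrow> int) \<Rightarrow> 'a \<Rightarrow> nat \<Rightarrow> nat \<Rightarrow> 'a mat set" where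
  "Bbarm v w n m = lower_borel n \<inter> Jgrp v w n m"

section \<open>Irreducible generic unitarizable representations, via their Whittaker models\<close>

text \<open>A space of functions GL_n(F) -> C (extended by 0 off GL_n).\<close>
definition cspace :: "('a mat \<Rightarrow> complex) set \<Rightarrow> bool" where
  "cspace U \<longleftrightarrow> (\<lambda>_. 0) \<in> U \<and> (\<forall>W1\<in>U. \<forall>W2\<in>U. (\<lambda>g. W1 g + W2 g) \<in> U) \<and>
                 (\<forall>c. \<forall>W\<in>U. (\<lambda>g. c * W g) \<in> U)"

definition rtrans_inv :: "nat \<Rightarrow> ('a::field mat \<Rightarrow> complex) set \<Rightarrow> bool" where
  "rtrans_inv n U \<longleftrightarrow> (\<forall>W\<in>U. \<forall>h\<in>GL n. (\<lambda>g. W (g * h)) \<in> U)"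

text \<open>V is the Whittaker model W(pi,psi) of an irreducible smooth generic representation pi of GL_n(F)
  (realised by right translation).\<close>
definition irred_whittaker_model ::
  "('a::field \<Rightarrow> int) \<Rightarrow> ('a \<Rightarrow> complex) \<Rightarrow> nat \<Rightarrow> ('a mat \<Rightarrow> complex) set \<Rightarrow> bool" where
  "irred_whittaker_model v \<psi> n V \<longleftrightarrow>
     cspace V \<and> rtrans_inv n V \<and>
     (\<forall>W\<in>V. \<forall>g. g \<notin> GL n \<longrightarrow> W g = 0) \<and>
     (\<forall>W\<in>V. \<forall>u\<in>upper_uni n. \<forall>g\<in>GL n. W (u * g) = psiN \<psi> n u * W g) \<and>
     (\<forall>W\<in>V. \<exists>m. \<forall>g\<in>GL n. \<forall>k\<in>Kcong v n m. W (g * k) = W g) \<and>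
     V \<noteq> {\<lambda>_. 0} \<and>
     (\<forall>U. U \<subseteq> V \<longrightarrow> cspace U \<longrightarrow> rtrans_inv n U \<longrightarrow> U \<noteq> {\<lambda>_. 0} \<longrightarrow> U = V)"

definition unitarizable :: "nat \<Rightarrow> ('a::field mat \<Rightarrow> complex) set \<Rightarrow> bool" where
  "unitarizable n V \<longleftrightarrow> (\<exists>B :: ('a mat \<Rightarrow> complex) \<Rightarrow> ('a mat \<Rightarrow> complex) \<Rightarrow> complex.
     (\<forall>W1\<in>V. \<forall>W2\<in>V. \<forall>W3\<in>V. B (\<lambda>g. W1 g + W2 g) W3 = B W1 W3 + B W2 W3) \<and>
     (\<forall>c. \<forall>W1\<in>V. \<forall>W2\<in>V. B (\<lambda>g. c * W1 g) W2 = c * B W1 W2) \<and>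
     (\<forall>W1\<in>V. \<forall>W2\<in>V. B W2 W1 = cnj (B W1 W2)) \<and>
     (\<forall>W\<in>V. W \<noteq> (\<lambda>_. 0) \<longrightarrow> 0 < Re (B W W)) \<and>
     (\<forall>h\<in>GL n. \<forall>W1\<in>V. \<forall>W2\<in>V. B (\<lambda>g. W1 (g * h)) (\<lambda>g. W2 (g * h)) = B W1 W2))"

definition howe_prop ::
  "('a::field \<Rightarrow> int) \<Rightarrow> 'a \<Rightarrow> ('a \<Rightarrow> complex) \<Rightarrow> nat \<Rightarrow> nat \<Rightarrow> ('a mat \<Rightarrow> complex) \<Rightarrow> bool" where
  "howe_prop v w \<psi> n m W \<longleftrightarrow>
     (\<forall>g\<in>GL n. \<forall>b\<in>Bbarm v w n m. \<forall>u\<in>Nm v w n m. W (g * (b * u)) = psiN \<psi> n u * W g)"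

definition normalized_howe_vector ::
  "('a::field \<Rightarrow> int) \<Rightarrow> 'a \<Rightarrow> ('a \<Rightarrow> complex) \<Rightarrow> nat \<Rightarrow> ('a mat \<Rightarrow> complex) set \<Rightarrow> nat
     \<Rightarrow> ('a mat \<Rightarrow> complex) \<Rightarrow> bool" where
  "normalized_howe_vector v w \<psi> n V m W \<longleftrightarrow>
     W \<in> V \<and> howe_prop v w \<psi> n m W \<and> W (1\<^sub>m n) = 1 \<and>
     (\<forall>W'\<in>V. howe_prop v w \<psi> n m W' \<and> W' (1\<^sub>m n) = 1 \<longrightarrow> W' = W)"

text \<open>blk_anti r A B = [[0, A],[B, 0]] with A of size (r+1)x(r+1) upper right, B of size r x r lower left.\<close>
definition blk_anti :: "nat \<Rightarrow> 'a::field mat \<Rightarrow> 'a mat \<Rightarrow> 'a mat" where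
  "blk_anti r A B = mat (2*r+1) (2*r+1) (\<lambda>(i,j).
     if i \<le> r \<and> r \<le> j then A $$ (i, j - r)
     else if r < i \<and> j < r then B $$ (i - r - 1, j) else 0)"

text \<open>blk_up r X Y = [[X, 0, Y],[0, 1, 0],[0, 0, I_r]] with r x r blocks X, Y.\<close>
definition blk_up :: "nat \<Rightarrow> 'a::field mat \<Rightarrow> 'a mat \<Rightarrow> 'a mat" where
  "blk_up r X Y = mat (2*r+1) (2*r+1) (\<lambda>(i,j).
     if i < r \<and> j < r then X $$ (i, j)
     else if i < r \<and> r < j then Y $$ (i, j - r - 1)
     else if i = j then 1 else 0)"

end

theory Submission
  imports Defs
begin


lemma mult_entry:
  assumes "A \<in> carrier_mat n1 n2" "B \<in> carrier_mat n2 n3" "i < n1" "j < n3"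
  shows "(A * B) $$ (i,j) = (\<Sum>k\<in>{0..<n2}. A $$ (i,k) * B $$ (k,j))"
  using assms by (auto simp: scalar_prod_def intro!: sum.cong)

lemma sum_single:
  assumes "k < n"
  shows "(\<Sum>c\<in>{0..<n}. (if c = k then f c else 0)) = (f (k::nat) :: 'b::comm_monoid_add)"
  using assms by (subst sum.delta) auto

lemma diagm_carrier[simp]: "diagm k f \<in> carrier_mat k k"
  by (simp add: diagm_def)

lemma diagm_dims[simp]: "dim_row (diagm k f) = k" "dim_col (diagm k f) = k"
  by (simp_all add: diagm_def)

lemma diagm_index[simp]: "i < k \<Longrightarrow> j < k \<Longrightarrow> diagm k f $$ (i,j) = (if i = j then f i else 0)"
  by (simp add: diagm_def)

lemma diagm_mult_left:
  assumes "A \<in> carrier_mat k c" "i < k" "j < c"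
  shows "(diagm k f * A) $$ (i,j) = f i * A $$ (i,j)"
proof -
  have "(diagm k f * A) $$ (i,j) = (\<Sum>x\<in>{0..<k}. diagm k f $$ (i,x) * A $$ (x,j))"
    by (rule mult_entry[OF diagm_carrier assms])
  also have "\<dots> = (\<Sum>x\<in>{0..<k}. if x = i then f i * A $$ (i,j) else 0)"
    using assms by (intro sum.cong) auto
  also have "\<dots> = f i * A $$ (i,j)" using assms by (simp add: sum.delta)
  finally show ?thesis .
qed

lemma diagm_mult_right:
  assumes "A \<in> carrier_mat c k" "i < c" "j < k"
  shows "(A * diagm k f) $$ (i,j) = A $$ (i,j) * f j"
proof -
  have "(A * diagm k f) $$ (i,j) = (\<Sum>x\<in>{0..<k}. A $$ (i,x) * diagm k f $$ (x,j))"
    by (rule mult_entry[OF assms(1) diagm_carrier assms(2,3)])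
  also have "\<dots> = (\<Sum>x\<in>{0..<k}. if x = j then A $$ (i,j) * f j else 0)"
    using assms by (intro sum.cong) auto
  also have "\<dots> = A $$ (i,j) * f j" using assms by (simp add: sum.delta)
  finally show ?thesis .
qed

lemma diag_sandwich:
  assumes "A \<in> carrier_mat n n" "i < n" "j < n"
  shows "(diagm n f * A * diagm n g) $$ (i,j) = f i * A $$ (i,j) * g j"
proof -
  have c: "diagm n f * A \<in> carrier_mat n n" using assms by (intro mult_carrier_mat) auto
  show ?thesis using diagm_mult_right[OF c assms(2,3)] diagm_mult_left[OF assms] by simp
qed

definition tv :: "nat \<Rightarrow> nat \<Rightarrow> nat \<Rightarrow> 'a::field \<Rightarrow> 'a mat" where
  "tv n p q t = mat n n (\<lambda>(x,y). (if x = y then 1 else 0) + (if x = p \<and> y = q then t else 0))"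

lemma tv_carrier[simp]: "tv n p q t \<in> carrier_mat n n"
  by (simp add: tv_def)

lemma tv_dims[simp]: "dim_row (tv n p q t) = n" "dim_col (tv n p q t) = n"
  by (simp_all add: tv_def)

lemma tv_index[simp]: "x < n \<Longrightarrow> y < n \<Longrightarrow>
  tv n p q t $$ (x,y) = (if x = y then 1 else 0) + (if x = p \<and> y = q then t else 0)"
  by (simp add: tv_def)

lemma conj_tv:
  assumes g: "g \<in> carrier_mat n n" and gi: "gi \<in> carrier_mat n n" and gig: "gi * g = 1\<^sub>m n"
    and pq: "p < n" "q < n"
  shows "mat n n (\<lambda>(x,y). (if x = y then 1 else 0) + t * g $$ (x,p) * gi $$ (q,y)) * g
         = g * tv n p q t"
proof (rule eq_matI)
  fix x y assume xy: "x < dim_row (g * tv n p q t)" "y < dim_col (g * tv n p q t)"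
  hence x: "x < n" and y: "y < n" using g by auto
  let ?N = "mat n n (\<lambda>(x,y). (if x = y then 1 else 0) + t * g $$ (x,p) * gi $$ (q,y))"
  have "(?N * g) $$ (x,y) = (\<Sum>c\<in>{0..<n}. ?N $$ (x,c) * g $$ (c,y))"
    by (rule mult_entry[OF _ g x y]) simp
  also have "\<dots> = (\<Sum>c\<in>{0..<n}. (if c = x then g $$ (x,y) else 0) + t * g $$ (x,p) * (gi $$ (q,c) * g $$ (c,y)))"
    using x by (intro sum.cong) (auto simp: algebra_simps)
  also have "\<dots> = g $$ (x,y) + t * g $$ (x,p) * (\<Sum>c\<in>{0..<n}. gi $$ (q,c) * g $$ (c,y))"
    using x by (simp add: sum.distrib sum_distrib_left sum.delta)
  also have "(\<Sum>c\<in>{0..<n}. gi $$ (q,c) * g $$ (c,y)) = (gi * g) $$ (q,y)"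
    by (rule mult_entry[OF gi g pq(2) y, symmetric])
  also have "\<dots> = (if q = y then 1 else 0)" using gig pq y by simp
  finally have L: "(?N * g) $$ (x,y) = g $$ (x,y) + t * g $$ (x,p) * (if q = y then 1 else 0)" .
  have "(g * tv n p q t) $$ (x,y) = (\<Sum>c\<in>{0..<n}. g $$ (x,c) * tv n p q t $$ (c,y))"
    by (rule mult_entry[OF g tv_carrier x y])
  also have "\<dots> = (\<Sum>c\<in>{0..<n}. (if c = y then g $$ (x,y) else 0) + (if c = p then g $$ (x,p) * (if y = q then t else 0) else 0))"
    using y by (intro sum.cong) (auto simp: distrib_left)
  also have "\<dots> = g $$ (x,y) + g $$ (x,p) * (if y = q then t else 0)"
    using y pq by (simp add: sum.distrib sum.delta)
  finally show "(?N * g) $$ (x,y) = (g * tv n p q t) $$ (x,y)" using L by (auto simp: distrib_left)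
qed (use g in auto)

lemma inv_entry:
  fixes g :: "'a::field mat"
  assumes g: "g \<in> carrier_mat n n" and gi: "gi \<in> carrier_mat n n" and gig: "gi * g = 1\<^sub>m n"
    and z: "z \<in> carrier_vec n" and gz: "g *\<^sub>v z = unit_vec n b" and qb: "q < n" "b < n"
  shows "gi $$ (q,b) = z $ q"
proof -
  have "z = (gi * g) *\<^sub>v z" using gig one_mult_mat_vec[OF z] by simp
  also have "\<dots> = gi *\<^sub>v unit_vec n b" using gi g z gz by simp
  finally have "z $ q = (gi *\<^sub>v unit_vec n b) $ q" by simp
  also have "\<dots> = (\<Sum>c\<in>{0..<n}. gi $$ (q,c) * unit_vec n b $ c)"
    using gi qb by (simp add: scalar_prod_def)
  also have "\<dots> = (\<Sum>c\<in>{0..<n}. if c = b then gi $$ (q,b) else 0)"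
    by (intro sum.cong) (auto simp: unit_vec_def)
  also have "\<dots> = gi $$ (q,b)" using qb by (simp add: sum.delta)
  finally show ?thesis by simp
qed

lemma GL_inverse:
  assumes "g \<in> GL n"
  obtains gi where "gi \<in> carrier_mat n n" "gi * g = 1\<^sub>m n"
proof -
  from assms have g: "g \<in> carrier_mat n n" and d: "det g \<noteq> 0" by (auto simp: GL_def)
  let ?gi = "(1 / det g) \<cdot>\<^sub>m adj_mat g"
  have "?gi \<in> carrier_mat n n" using adj_mat(1)[OF g] by simp
  moreover have "?gi * g = 1\<^sub>m n"
    using adj_mat[OF g] d by (simp add: mult_smult_assoc_mat[OF adj_mat(1)[OF g] g]) (intro eq_matI, auto)
  ultimately show ?thesis using that by blast
qed


context
  fixes v :: "'a::field \<Rightarrow> int"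
  assumes F: "padic_field v"
begin

lemma vmult: "x \<noteq> 0 \<Longrightarrow> y \<noteq> 0 \<Longrightarrow> v (x * y) = v x + v y"
  using F unfolding padic_field_def by blast

lemma vultra: "x \<noteq> 0 \<Longrightarrow> y \<noteq> 0 \<Longrightarrow> x + y \<noteq> 0 \<Longrightarrow> min (v x) (v y) \<le> v (x + y)"
  using F unfolding padic_field_def by blast

lemma vone: "v 1 = 0"
  using vmult[of 1 1] by simp

lemma vinv: "x \<noteq> 0 \<Longrightarrow> v (inverse x) = - v x"
  using vmult[of x "inverse x"] vone by simp

lemma vdiv: "x \<noteq> 0 \<Longrightarrow> y \<noteq> 0 \<Longrightarrow> v (x / y) = v x - v y"
  using vmult[of x "inverse y"] vinv[of y] by (simp add: divide_inverse)

lemma vmone: "v (-1) = 0"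
  using vmult[of "-1" "-1"] vone by simp

lemma vneg: "x \<noteq> 0 \<Longrightarrow> v (- x) = v x"
  using vmult[of "-1" x] vmone by simp

lemma vpow: "w \<noteq> 0 \<Longrightarrow> v w = 1 \<Longrightarrow> v (w ^ k) = int k"
  by (induction k) (auto simp: vone vmult)

lemma pideal_iff: "x \<in> pideal v k \<longleftrightarrow> x = 0 \<or> k \<le> v x"
  by (simp add: pideal_def)

lemma pideal_zero[simp]: "0 \<in> pideal v k"
  by (simp add: pideal_def)

lemma pideal_mono: "k1 \<le> k2 \<Longrightarrow> x \<in> pideal v k2 \<Longrightarrow> x \<in> pideal v k1"
  by (auto simp: pideal_def)

lemma pideal_mult: "x \<in> pideal v k1 \<Longrightarrow> y \<in> pideal v k2 \<Longrightarrow> x * y \<in> pideal v (k1 + k2)"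
  by (cases "x = 0 \<or> y = 0") (auto simp: pideal_def vmult[of x y])

lemma pideal_neg: "x \<in> pideal v k \<Longrightarrow> - x \<in> pideal v k"
  by (cases "x = 0") (auto simp: pideal_def vneg[of x])

lemma pideal_scale_unit: "x \<in> pideal v k \<Longrightarrow> c \<noteq> 0 \<Longrightarrow> v c = 0 \<Longrightarrow> x * c \<in> pideal v k"
  by (cases "x = 0") (auto simp: pideal_def vmult[of x c])

lemma pideal_wpow:
  assumes "w \<noteq> 0" "v w = 1" "x \<in> pideal v k" "k + int A - int B = k'"
  shows "x * w ^ A / w ^ B \<in> pideal v k'"
proof (cases "x = 0")
  case False
  have "v (x * w ^ A / w ^ B) = v x + int A - int B"
    using False assms(1,2) by (simp add: vdiv vmult vpow)
  then show ?thesis using assms False by (auto simp: pideal_def)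
qed simp

lemma unit_of_cong:
  assumes m: "1 \<le> m" and c: "c \<in> {1 + x |x. x \<in> pideal v m}"
  shows "c \<noteq> 0 \<and> v c = 0"
proof -
  obtain e where ce: "c = 1 + e" and e: "e \<in> pideal v m" using c by blast
  show ?thesis
  proof (cases "e = 0")
    case True thus ?thesis using ce vone by simp
  next
    case False
    hence ve: "m \<le> v e" using e by (simp add: pideal_def)
    have c0: "c \<noteq> 0"
    proof
      assume "c = 0"
      hence "e = -1" using ce by (simp add: eq_neg_iff_add_eq_0 add.commute)
      thus False using ve m vmone by simp
    qed
    have "min (v 1) (v e) \<le> v (1 + e)" using vultra[of 1 e] False c0 ce by simp
    hence ge: "0 \<le> v c" using ve m vone ce by simp
    have "min (v c) (v (- e)) \<le> v (c + - e)" using vultra[of c "- e"] False c0 ce by simp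
    hence "min (v c) (v e) \<le> 0" using ce vone vneg[OF False] by simp
    hence "v c \<le> 0" using ve m by simp
    thus ?thesis using ge c0 by simp
  qed
qed

end

context
  fixes v :: "'a::field \<Rightarrow> int" and \<psi> :: "'a \<Rightarrow> complex"
  assumes F: "padic_field v" and psi: "add_char_conductor_O v \<psi>"
begin

lemma psi_add: "\<psi> (x + y) = \<psi> x * \<psi> y"
  using psi unfolding add_char_conductor_O_def by blast

lemma psi_nz: "\<psi> x \<noteq> 0"
proof -
  have "cmod (\<psi> x) = 1" using psi unfolding add_char_conductor_O_def by blast
  thus ?thesis by auto
qed

lemma psi0: "\<psi> 0 = 1"
  using psi_add[of 0 0] psi_nz[of 0] by simp

lemma psi_detect:
  assumes H: "\<forall>t\<in>pideal v k. \<psi> (t * y) = 1"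
  shows "y \<in> pideal v (- k)"
proof (rule ccontr)
  assume nin: "y \<notin> pideal v (- k)"
  hence y0: "y \<noteq> 0" and vy: "v y < - k" by (auto simp: pideal_def)
  obtain x where x: "x \<in> pideal v (-1)" "\<psi> x \<noteq> 1"
    using psi unfolding add_char_conductor_O_def by blast
  have x0: "x \<noteq> 0" using x psi0 by auto
  have vx: "-1 \<le> v x" using x x0 by (simp add: pideal_def)
  let ?t = "x / y"
  have "v ?t = v x - v y" using vdiv[OF F x0 y0] .
  hence "?t \<in> pideal v k" using vx vy by (simp add: pideal_def)
  hence "\<psi> (?t * y) = 1" using H by blast
  thus False using x y0 by simp
qed

lemma psi_ratio:
  assumes H: "\<forall>s\<in>pideal v (- int m). \<psi> s = \<psi> (s * c)"
  shows "c \<in> {1 + x |x. x \<in> pideal v (int m)}"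
proof -
  have "\<forall>s\<in>pideal v (- int m). \<psi> (s * (c - 1)) = 1"
  proof
    fix s assume s: "s \<in> pideal v (- int m)"
    have "\<psi> (s * c) = \<psi> (s + s * (c - 1))" by (simp add: algebra_simps)
    also have "\<dots> = \<psi> s * \<psi> (s * (c - 1))" by (rule psi_add)
    finally show "\<psi> (s * (c - 1)) = 1" using H s psi_nz[of s] by auto
  qed
  hence "c - 1 \<in> pideal v (- (- int m))" by (rule psi_detect)
  hence "c = 1 + (c - 1)" "c - 1 \<in> pideal v (int m)" by auto
  thus ?thesis by blast
qed

end


lemma omega_carrier[simp]: "omega k \<in> carrier_mat k k"
  by (simp add: omega_def)

lemma omega_index[simp]: "i < k \<Longrightarrow> j < k \<Longrightarrow> omega k $$ (i,j) = (if i + j = k - 1 then 1 else 0)"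
  by (simp add: omega_def)

lemma blk_up_carrier[simp]: "blk_up r X Y \<in> carrier_mat (2*r+1) (2*r+1)"
  by (simp add: blk_up_def)

lemma blk_up_dims[simp]: "dim_row (blk_up r X Y) = 2*r+1" "dim_col (blk_up r X Y) = 2*r+1"
  by (simp_all add: blk_up_def)

lemma blk_up_index: "i < 2*r+1 \<Longrightarrow> j < 2*r+1 \<Longrightarrow> blk_up r X Y $$ (i,j) =
  (if i < r \<and> j < r then X $$ (i, j)
     else if i < r \<and> r < j then Y $$ (i, j - r - 1)
     else if i = j then 1 else 0)"
  by (simp add: blk_up_def)

lemma blk_anti_carrier[simp]: "blk_anti r A B \<in> carrier_mat (2*r+1) (2*r+1)"
  by (simp add: blk_anti_def)

lemma sum_split3:
  "(\<Sum>c\<in>{0..<2*r+1}. f c) = (\<Sum>c\<in>{0..<r}. f c) + f r + (\<Sum>c\<in>{0..<r}. f (r+1+c))" for r :: nat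
proof -
  have e: "{0..<2*r+1} = ({0..<r} \<union> {r}) \<union> ((\<lambda>c. r+1+c) ` {0..<r})"
  proof (rule Set.set_eqI, rule iffI)
    fix x assume "x \<in> {0..<2*r+1}"
    thus "x \<in> ({0..<r} \<union> {r}) \<union> ((\<lambda>c. r+1+c) ` {0..<r})"
      by (cases "x \<le> r") (auto simp: image_iff intro!: bexI[of _ "x - r - 1"])
  qed auto
  have "(\<Sum>c\<in>{0..<2*r+1}. f c) = (\<Sum>c\<in>{0..<r} \<union> {r}. f c) + (\<Sum>c\<in>(\<lambda>c. r+1+c) ` {0..<r}. f c)"
    unfolding e by (rule sum.union_disjoint) auto
  also have "(\<Sum>c\<in>(\<lambda>c. r+1+c) ` {0..<r}. f c) = (\<Sum>c\<in>{0..<r}. f (r+1+c))"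
    by (subst sum.reindex) (auto simp: inj_on_def)
  also have "(\<Sum>c\<in>{0..<r} \<union> {r}. f c) = (\<Sum>c\<in>{0..<r}. f c) + f r"
    by (subst sum.union_disjoint) auto
  finally show ?thesis .
qed

lemma blk_up_mult:
  fixes A B C D :: "'a::field mat"
  assumes A: "A \<in> carrier_mat r r" and B: "B \<in> carrier_mat r r"
    and C: "C \<in> carrier_mat r r" and D: "D \<in> carrier_mat r r"
  shows "blk_up r A B * blk_up r C D = blk_up r (A * C) (A * D + B)"
proof (rule eq_matI)
  fix i k assume "i < dim_row (blk_up r (A * C) (A * D + B))" "k < dim_col (blk_up r (A * C) (A * D + B))"
  hence i: "i < 2*r+1" and k: "k < 2*r+1" by auto
  let ?P = "blk_up r A B" and ?Q = "blk_up r C D"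
  have "(?P * ?Q) $$ (i,k) = (\<Sum>c\<in>{0..<2*r+1}. ?P $$ (i,c) * ?Q $$ (c,k))"
    by (rule mult_entry[OF blk_up_carrier blk_up_carrier i k])
  also have "\<dots> = (\<Sum>c\<in>{0..<r}. ?P $$ (i,c) * ?Q $$ (c,k)) + ?P $$ (i,r) * ?Q $$ (r,k)
       + (\<Sum>c\<in>{0..<r}. ?P $$ (i,r+1+c) * ?Q $$ (r+1+c,k))"
    by (rule sum_split3)
  finally have S: "(?P * ?Q) $$ (i,k) = \<dots>" .
  show "(?P * ?Q) $$ (i,k) = blk_up r (A * C) (A * D + B) $$ (i,k)"
  proof (cases "i < r")
    case iT: True
    have s3: "(\<Sum>c\<in>{0..<r}. ?P $$ (i,r+1+c) * ?Q $$ (r+1+c,k))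
          = (if r < k then B $$ (i, k - r - 1) else 0)"
    proof -
      have "(\<Sum>c\<in>{0..<r}. ?P $$ (i,r+1+c) * ?Q $$ (r+1+c,k))
          = (\<Sum>c\<in>{0..<r}. if c = k - r - 1 then (if r < k then B $$ (i, k - r - 1) else 0) else 0)"
        using iT i k by (intro sum.cong) (auto simp: blk_up_index)
      also have "\<dots> = (if r < k then B $$ (i, k - r - 1) else 0)"
        using k by (cases "r < k") (auto simp: sum.delta)
      finally show ?thesis .
    qed
    show ?thesis
    proof (cases "k < r")
      case True
      have "(\<Sum>c\<in>{0..<r}. ?P $$ (i,c) * ?Q $$ (c,k)) = (\<Sum>c\<in>{0..<r}. A $$ (i,c) * C $$ (c,k))"
        using iT True by (intro sum.cong) (auto simp: blk_up_index)
      also have "\<dots> = (A * C) $$ (i,k)" using mult_entry[OF A C iT True] by simp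
      finally show ?thesis using S s3 iT True i k by (simp add: blk_up_index)
    next
      case False
      show ?thesis
      proof (cases "k = r")
        case True
        have "(\<Sum>c\<in>{0..<r}. ?P $$ (i,c) * ?Q $$ (c,k)) = 0"
          using iT True k by (intro sum.neutral) (auto simp: blk_up_index)
        thus ?thesis using S s3 iT True i k by (simp add: blk_up_index)
      next
        case False2: False
        have kk: "k - r - 1 < r" using k False False2 by auto
        have "(\<Sum>c\<in>{0..<r}. ?P $$ (i,c) * ?Q $$ (c,k)) = (\<Sum>c\<in>{0..<r}. A $$ (i,c) * D $$ (c,k - r - 1))"
          using iT False False2 k by (intro sum.cong) (auto simp: blk_up_index)
        also have "\<dots> = (A * D) $$ (i,k - r - 1)" using mult_entry[OF A D iT kk] by simp
        finally show ?thesis using S s3 iT False False2 i k kk A B D by (simp add: blk_up_index)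
      qed
    qed
  next
    case iF: False
    have s1: "(\<Sum>c\<in>{0..<r}. ?P $$ (i,c) * ?Q $$ (c,k)) = 0"
      using iF i by (intro sum.neutral) (auto simp: blk_up_index)
    show ?thesis
    proof (cases "i = r")
      case True
      have "(\<Sum>c\<in>{0..<r}. ?P $$ (i,r+1+c) * ?Q $$ (r+1+c,k)) = 0"
        using True i by (intro sum.neutral) (auto simp: blk_up_index)
      thus ?thesis using S s1 True k by (simp add: blk_up_index)
    next
      case False
      have "(\<Sum>c\<in>{0..<r}. ?P $$ (i,r+1+c) * ?Q $$ (r+1+c,k))
          = (\<Sum>c\<in>{0..<r}. if c = i - r - 1 then ?Q $$ (i,k) else 0)"
        using iF False i k by (intro sum.cong) (auto simp: blk_up_index)
      also have "\<dots> = ?Q $$ (i,k)" using iF False i by (simp add: sum.delta)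
      finally show ?thesis using S s1 iF False i k by (simp add: blk_up_index)
    qed
  qed
qed auto


definition Hm :: "nat \<Rightarrow> (nat \<Rightarrow> 'a::field) \<Rightarrow> (nat \<Rightarrow> 'a) \<Rightarrow> 'a mat" where
  "Hm r a b = blk_anti r (diagm (r+1) a) (diagm r b * omega r)"

lemma Hm_carrier[simp]: "Hm r a b \<in> carrier_mat (2*r+1) (2*r+1)"
  unfolding Hm_def by (rule blk_anti_carrier)

lemma Hm_index:
  assumes x: "x < 2*r+1" and c: "c < 2*r+1"
  shows "Hm r a b $$ (x,c) = (if x \<le> r then (if c = r + x then a x else 0)
                              else (if c = 2*r - x then b (x - r - 1) else 0))"
proof (cases "x \<le> r")
  case True
  thus ?thesis using x c by (auto simp: Hm_def blk_anti_def)
next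
  case False
  show ?thesis
  proof (cases "c < r")
    case True
    have "(diagm r b * omega r) $$ (x - r - 1, c) = b (x - r - 1) * omega r $$ (x - r - 1, c)"
      using False x True by (intro diagm_mult_left) auto
    thus ?thesis using False True x c by (auto simp: Hm_def blk_anti_def)
  next
    case cF: False
    thus ?thesis using False x c by (auto simp: Hm_def blk_anti_def)
  qed
qed

lemma HM_index:
  assumes M: "M \<in> carrier_mat (2*r+1) (2*r+1)" and x: "x < 2*r+1" and y: "y < 2*r+1"
  shows "(Hm r a b * M) $$ (x,y) = (if x \<le> r then a x * M $$ (r+x, y) else b (x-r-1) * M $$ (2*r-x, y))"
proof -
  have "(Hm r a b * M) $$ (x,y) = (\<Sum>c\<in>{0..<2*r+1}. Hm r a b $$ (x,c) * M $$ (c,y))"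
    by (rule mult_entry[OF Hm_carrier M x y])
  also have "\<dots> = (\<Sum>c\<in>{0..<2*r+1}. if c = (if x \<le> r then r + x else 2*r - x) then
        (if x \<le> r then a x * M $$ (r+x, y) else b (x-r-1) * M $$ (2*r-x, y)) else 0)"
    using x by (intro sum.cong) (auto simp: Hm_index)
  also have "\<dots> = (if x \<le> r then a x * M $$ (r+x, y) else b (x-r-1) * M $$ (2*r-x, y))"
    using x by (subst sum.delta) auto
  finally show ?thesis .
qed

definition Gm :: "nat \<Rightarrow> (nat \<Rightarrow> 'a::field) \<Rightarrow> (nat \<Rightarrow> 'a) \<Rightarrow> 'a mat \<Rightarrow> 'a mat \<Rightarrow> 'a mat" where
  "Gm r a b ur Y = Hm r a b * blk_up r ur (ur * Y)"

lemma Gm_carrier[simp]: "Gm r a b ur Y \<in> carrier_mat (2*r+1) (2*r+1)"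
  unfolding Gm_def by (rule mult_carrier_mat[OF Hm_carrier blk_up_carrier])

lemma Gm_index:
  assumes x: "x < 2*r+1" and y: "y < 2*r+1"
  shows "Gm r a b ur Y $$ (x,y) = (if x \<le> r then (if y = r + x then a x else 0)
            else b (x-r-1) * blk_up r ur (ur * Y) $$ (2*r-x, y))"
proof -
  have "Gm r a b ur Y $$ (x,y) = (if x \<le> r then a x * blk_up r ur (ur * Y) $$ (r+x, y)
        else b (x-r-1) * blk_up r ur (ur * Y) $$ (2*r-x, y))"
    unfolding Gm_def by (rule HM_index[OF blk_up_carrier x y])
  moreover have "x \<le> r \<Longrightarrow> blk_up r ur (ur * Y) $$ (r+x, y) = (if y = r + x then 1 else 0)"
    using x y by (simp add: blk_up_index)
  ultimately show ?thesis by auto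
qed

lemma Gm_col:
  assumes ur: "ur \<in> carrier_mat r r" and Y: "Y \<in> carrier_mat r r"
    and j: "j < r" and Yz: "\<forall>c<r. 0 < j \<longrightarrow> Y $$ (c, j - 1) = 0" and x: "x < 2*r+1"
  shows "Gm r a b ur Y $$ (x, r + j) = (if x = j then a j else 0)"
proof (cases "x \<le> r")
  case True thus ?thesis using x j by (auto simp: Gm_index)
next
  case False
  have i0: "2*r - x < r" using False x by auto
  have "blk_up r ur (ur * Y) $$ (2*r-x, r+j) = 0"
  proof (cases "j = 0")
    case True thus ?thesis using i0 by (simp add: blk_up_index)
  next
    case jF: False
    have "(ur * Y) $$ (2*r-x, j - 1) = (\<Sum>c\<in>{0..<r}. ur $$ (2*r-x, c) * Y $$ (c, j - 1))"
      using j by (intro mult_entry[OF ur Y i0]) auto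
    also have "\<dots> = 0" using Yz jF by (intro sum.neutral) auto
    finally show ?thesis using i0 jF j by (simp add: blk_up_index)
  qed
  thus ?thesis using False x j by (simp add: Gm_index)
qed

definition zv :: "nat \<Rightarrow> (nat \<Rightarrow> 'a::field) \<Rightarrow> 'a mat \<Rightarrow> nat \<Rightarrow> 'a vec" where
  "zv r a Y bb = vec (2*r+1) (\<lambda>c. if c = r + bb then 1 / a bb
       else if c < r \<and> 0 < bb then - Y $$ (c, bb - 1) / a bb else 0)"

lemma zv_carrier[simp]: "zv r a Y bb \<in> carrier_vec (2*r+1)"
  by (simp add: zv_def)

lemma zv_index: "c < 2*r+1 \<Longrightarrow> zv r a Y bb $ c = (if c = r + bb then 1 / a bb
       else if c < r \<and> 0 < bb then - Y $$ (c, bb - 1) / a bb else 0)"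
  by (simp add: zv_def)

lemma Gm_zv:
  assumes ur: "ur \<in> carrier_mat r r" and Y: "Y \<in> carrier_mat r r"
    and bb: "bb \<le> r" and abb: "a bb \<noteq> 0"
  shows "Gm r a b ur Y *\<^sub>v zv r a Y bb = unit_vec (2*r+1) bb"
proof (rule eq_vecI)
  fix x assume "x < dim_vec (unit_vec (2*r+1) bb)"
  hence x: "x < 2*r+1" by simp
  let ?G = "Gm r a b ur Y" and ?z = "zv r a Y bb"
  have dG: "dim_row ?G = 2*r+1" "dim_col ?G = 2*r+1" using Gm_carrier[of r a b ur Y] by auto
  have "(?G *\<^sub>v ?z) $ x = row ?G x \<bullet> ?z" using x dG by (intro index_mult_mat_vec) simp
  also have "\<dots> = (\<Sum>c\<in>{0..<2*r+1}. ?G $$ (x,c) * ?z $ c)"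
    unfolding scalar_prod_def using x dG by (intro sum.cong) (auto simp: zv_def)
  finally have e: "(?G *\<^sub>v ?z) $ x = (\<Sum>c\<in>{0..<2*r+1}. ?G $$ (x,c) * ?z $ c)" .
  show "(?G *\<^sub>v ?z) $ x = unit_vec (2*r+1) bb $ x"
  proof (cases "x \<le> r")
    case True
    have "(\<Sum>c\<in>{0..<2*r+1}. ?G $$ (x,c) * ?z $ c) = (\<Sum>c\<in>{0..<2*r+1}. if c = r + x then a x * ?z $ (r+x) else 0)"
      using True x by (intro sum.cong) (auto simp: Gm_index)
    also have "\<dots> = a x * ?z $ (r+x)" using True x by (subst sum.delta) auto
    also have "\<dots> = (if x = bb then 1 else 0)" using True x abb by (auto simp: zv_index)
    finally show ?thesis using e x bb by (simp add: unit_vec_def)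
  next
    case False
    define i0 where "i0 = 2*r - x"
    have i0: "i0 < r" using False x by (auto simp: i0_def)
    let ?M = "blk_up r ur (ur * Y)"
    let ?b' = "b (x-r-1)"
    have G: "\<And>c. c < 2*r+1 \<Longrightarrow> ?G $$ (x,c) = ?b' * ?M $$ (i0, c)"
      using False x by (simp add: Gm_index i0_def)
    have "(\<Sum>c\<in>{0..<2*r+1}. ?G $$ (x,c) * ?z $ c) = (\<Sum>c\<in>{0..<2*r+1}. ?b' * ?M $$ (i0, c) * ?z $ c)"
      using G by (intro sum.cong) auto
    also have "\<dots> = (\<Sum>c\<in>{0..<r}. ?b' * ?M $$ (i0, c) * ?z $ c) + ?b' * ?M $$ (i0, r) * ?z $ r
        + (\<Sum>c\<in>{0..<r}. ?b' * ?M $$ (i0, r+1+c) * ?z $ (r+1+c))"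
      by (rule sum_split3)
    also have "(\<Sum>c\<in>{0..<r}. ?b' * ?M $$ (i0, c) * ?z $ c)
        = (\<Sum>c\<in>{0..<r}. - (?b' / a bb) * (if 0 < bb then ur $$ (i0, c) * Y $$ (c, bb - 1) else 0))"
      using i0 bb by (intro sum.cong) (auto simp: blk_up_index zv_index)
    also have "?b' * ?M $$ (i0, r) * ?z $ r = 0" using i0 by (simp add: blk_up_index)
    also have "(\<Sum>c\<in>{0..<r}. ?b' * ?M $$ (i0, r+1+c) * ?z $ (r+1+c))
        = (\<Sum>c\<in>{0..<r}. if c = bb - 1 then (if 0 < bb then (?b' / a bb) * (ur * Y) $$ (i0, bb - 1) else 0) else 0)"
      using i0 bb by (intro sum.cong) (auto simp: blk_up_index zv_index)
    also have "\<dots> = (if 0 < bb then (?b' / a bb) * (ur * Y) $$ (i0, bb - 1) else 0)"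
      using bb by (subst sum.delta) auto
    finally have S: "(\<Sum>c\<in>{0..<2*r+1}. ?G $$ (x,c) * ?z $ c) =
       (\<Sum>c\<in>{0..<r}. - (?b' / a bb) * (if 0 < bb then ur $$ (i0, c) * Y $$ (c, bb - 1) else 0))
       + (if 0 < bb then (?b' / a bb) * (ur * Y) $$ (i0, bb - 1) else 0)" by simp
    have "(\<Sum>c\<in>{0..<2*r+1}. ?G $$ (x,c) * ?z $ c) = 0"
    proof (cases "0 < bb")
      case True
      have "(ur * Y) $$ (i0, bb - 1) = (\<Sum>c\<in>{0..<r}. ur $$ (i0, c) * Y $$ (c, bb - 1))"
        using bb True by (intro mult_entry[OF ur Y i0]) auto
      thus ?thesis using S True by (simp add: sum_negf sum_divide_distrib[symmetric] sum_distrib_left[symmetric])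
    next
      case False thus ?thesis using S by simp
    qed
    thus ?thesis using e x bb False by (simp add: unit_vec_def)
  qed
qed (use Gm_carrier[of r a b ur Y] in auto)


lemma J_mem:
  fixes x :: "'a::field mat"
  assumes x: "x \<in> carrier_mat n n" and w: "w \<noteq> 0"
    and H: "\<forall>i<n. \<forall>j<n. x $$ (i,j) * w ^ (2*j*m) / w ^ (2*i*m) - (if i = j then 1 else 0) \<in> pideal v (int m)"
  shows "x \<in> Jgrp v w n m"
proof -
  let ?k = "mat n n (\<lambda>(i,j). x $$ (i,j) * w ^ (2*j*m) / w ^ (2*i*m))"
  have k: "?k \<in> Kcong v n m" using H by (simp add: Kcong_def)
  have "x = diagm n (\<lambda>i. w ^ (2 * i * m)) * ?k * diagm n (\<lambda>i. inverse (w ^ (2 * i * m)))"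
  proof (rule eq_matI)
    fix i j assume ij: "i < dim_row (diagm n (\<lambda>i. w ^ (2 * i * m)) * ?k * diagm n (\<lambda>i. inverse (w ^ (2 * i * m))))"
       "j < dim_col (diagm n (\<lambda>i. w ^ (2 * i * m)) * ?k * diagm n (\<lambda>i. inverse (w ^ (2 * i * m))))"
    hence i: "i < n" and j: "j < n" by auto
    have "(diagm n (\<lambda>i. w ^ (2 * i * m)) * ?k * diagm n (\<lambda>i. inverse (w ^ (2 * i * m)))) $$ (i,j)
        = w ^ (2 * i * m) * ?k $$ (i,j) * inverse (w ^ (2 * j * m))"
      by (rule diag_sandwich) (use i j in auto)
    also have "\<dots> = x $$ (i,j)" using i j w by (simp add: field_simps)
    finally show "x $$ (i,j) = (diagm n (\<lambda>i. w ^ (2 * i * m)) * ?k * diagm n (\<lambda>i. inverse (w ^ (2 * i * m)))) $$ (i,j)" by simp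
  qed (use x in auto)
  thus ?thesis using k unfolding Jgrp_def by blast
qed

lemma tv_upper: "p < q \<Longrightarrow> q < n \<Longrightarrow> tv n p q t \<in> upper_uni n"
  by (auto simp: upper_uni_def)

lemma tv_lower: "q < p \<Longrightarrow> p < n \<Longrightarrow> tv n p q t \<in> lower_borel n"
  by (auto simp: lower_borel_def)

lemma tv_J:
  assumes "p \<noteq> q" "p < n" "q < n" "w \<noteq> 0" "t * w ^ (2*q*m) / w ^ (2*p*m) \<in> pideal v (int m)"
  shows "tv n p q t \<in> Jgrp v w n m"
  by (rule J_mem) (use assms in \<open>auto simp: pideal_def\<close>)

lemma one_J: "w \<noteq> 0 \<Longrightarrow> (1\<^sub>m n :: 'a::field mat) \<in> Jgrp v w n m"
  by (rule J_mem) (auto simp: pideal_def)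

lemma one_Nm: "w \<noteq> 0 \<Longrightarrow> (1\<^sub>m n :: 'a::field mat) \<in> Nm v w n m"
  using one_J[of w n v m] by (auto simp: Nm_def upper_uni_def)

lemma one_Bbarm: "w \<noteq> 0 \<Longrightarrow> (1\<^sub>m n :: 'a::field mat) \<in> Bbarm v w n m"
  using one_J[of w n v m] by (auto simp: Bbarm_def lower_borel_def)

lemma psiN_tv:
  assumes "p < n - 1"
  shows "psiN \<psi> n (tv n p q t) = \<psi> (if q = p + 1 then t else 0)"
proof -
  have "(\<Sum>i<n - 1. tv n p q t $$ (i, Suc i)) = (\<Sum>i<n - 1. if i = p then (if q = p + 1 then t else 0) else 0)"
    using assms by (intro sum.cong) auto
  also have "\<dots> = (if q = p + 1 then t else 0)" using assms by (subst sum.delta) auto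
  finally show ?thesis by (simp add: psiN_def)
qed

lemma psiN_one: "psiN \<psi> n (1\<^sub>m n :: 'a::field mat) = \<psi> 0"
proof -
  have "(\<Sum>i<n - 1. (1\<^sub>m n :: 'a mat) $$ (i, Suc i)) = 0" by (intro sum.neutral) auto
  thus ?thesis by (simp add: psiN_def)
qed

lemma rowmat:
  fixes f :: "nat \<Rightarrow> 'a::field"
  assumes j: "j + 1 < n" and f: "\<forall>y\<le>j. f y = 0"
  shows "mat n n (\<lambda>(x,y). (if x = y then 1 else 0) + (if x = j then f y else 0)) \<in> upper_uni n"
    "psiN \<psi> n (mat n n (\<lambda>(x,y). (if x = y then 1 else 0) + (if x = j then f y else 0))) = \<psi> (f (j+1))"
proof -
  show "mat n n (\<lambda>(x,y). (if x = y then 1 else 0) + (if x = j then f y else 0)) \<in> upper_uni n"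
    using f by (auto simp: upper_uni_def)
  have "(\<Sum>i<n - 1. mat n n (\<lambda>(x,y). (if x = y then 1 else 0) + (if x = j then f y else 0)) $$ (i, Suc i))
      = (\<Sum>i<n - 1. if i = j then f (j+1) else 0)"
    using j by (intro sum.cong) auto
  also have "\<dots> = f (j+1)" using j by (subst sum.delta) auto
  finally show "psiN \<psi> n (mat n n (\<lambda>(x,y). (if x = y then 1 else 0) + (if x = j then f y else 0))) = \<psi> (f (j+1))"
    by (simp add: psiN_def)
qed

lemma blk_up_one_upper: "blk_up r (1\<^sub>m r) Z \<in> upper_uni (2*r+1)"
  by (auto simp: upper_uni_def blk_up_index)

lemma psiN_blk_up_one: "psiN \<psi> (2*r+1) (blk_up r (1\<^sub>m r) Z) = \<psi> 0"
proof -
  have "(\<Sum>i<2*r+1 - 1. blk_up r (1\<^sub>m r) Z $$ (i, Suc i)) = 0"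
    by (intro sum.neutral) (auto simp: blk_up_index)
  thus ?thesis by (simp add: psiN_def)
qed

lemma blk_up_one_J:
  fixes Z :: "'a::field mat"
  assumes F: "padic_field v" and w: "w \<noteq> 0" "v w = 1"
    and Z: "\<forall>i<r. \<forall>l<r. Z $$ (i,l) \<in> pideal v (- (int m + 2 * int m * (int r + int l - int i)))"
  shows "blk_up r (1\<^sub>m r) Z \<in> Jgrp v w (2*r+1) m"
proof (rule J_mem[OF blk_up_carrier w(1)], intro allI impI)
  fix i j assume i: "i < 2*r+1" and j: "j < 2*r+1"
  show "blk_up r (1\<^sub>m r) Z $$ (i, j) * w ^ (2 * j * m) / w ^ (2 * i * m) - (if i = j then 1 else 0)
        \<in> pideal v (int m)"
  proof (cases "i < r \<and> r < j")
    case True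
    have jj: "j - r - 1 < r" using j True by auto
    have "Z $$ (i, j - r - 1) * w ^ (2 * j * m) / w ^ (2 * i * m) \<in> pideal v (int m)"
      apply (rule pideal_wpow[OF F w Z[rule_format, OF _ jj]])
      using True j by (auto simp: algebra_simps of_nat_diff)
    thus ?thesis using True i j by (simp add: blk_up_index)
  next
    case False
    thus ?thesis using i j w by (auto simp: blk_up_index pideal_def)
  qed
qed


lemma W_vanish:
  assumes pi: "irred_whittaker_model v \<psi> n V" and WV: "W \<in> V" and Wg: "W g \<noteq> 0"
  shows "g \<in> GL n"
proof -
  have "\<forall>W\<in>V. \<forall>g. g \<notin> GL n \<longrightarrow> W g = 0" using pi by (simp add: irred_whittaker_model_def)
  thus ?thesis using WV Wg by blast
qed

lemma W_whit:
  assumes pi: "irred_whittaker_model v \<psi> n V" and WV: "W \<in> V" and u: "u \<in> upper_uni n" and g: "g \<in> GL n"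
  shows "W (u * g) = psiN \<psi> n u * W g"
proof -
  have "\<forall>W\<in>V. \<forall>u\<in>upper_uni n. \<forall>g\<in>GL n. W (u * g) = psiN \<psi> n u * W g"
    using pi by (simp add: irred_whittaker_model_def)
  thus ?thesis using WV u g by blast
qed

lemma W_howe:
  assumes howe: "normalized_howe_vector v w \<psi> n V m W"
    and g: "g \<in> GL n" and b: "b \<in> Bbarm v w n m" and u: "u \<in> Nm v w n m"
  shows "W (g * (b * u)) = psiN \<psi> n u * W g"
proof -
  have "howe_prop v w \<psi> n m W" using howe by (simp add: normalized_howe_vector_def)
  thus ?thesis using g b u unfolding howe_prop_def by blast
qed

lemma principle_N:
  assumes howe: "normalized_howe_vector v w \<psi> n V m W" and pi: "irred_whittaker_model v \<psi> n V"
    and w0: "w \<noteq> 0" and g: "g \<in> GL n" and Wg: "W g \<noteq> 0" and x: "x \<in> Nm v w n m"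
    and nn: "nn \<in> upper_uni n" and eq: "nn * g = g * x"
  shows "psiN \<psi> n x = psiN \<psi> n nn"
proof -
  have WV: "W \<in> V" using howe by (simp add: normalized_howe_vector_def)
  have xc: "x \<in> carrier_mat n n" using x by (simp add: Nm_def upper_uni_def)
  have "W (g * (1\<^sub>m n * x)) = psiN \<psi> n x * W g"
    by (rule W_howe[OF howe g one_Bbarm[OF w0] x])
  moreover have "1\<^sub>m n * x = x" using xc by simp
  moreover have "W (nn * g) = psiN \<psi> n nn * W g" by (rule W_whit[OF pi WV nn g])
  ultimately have "psiN \<psi> n x * W g = psiN \<psi> n nn * W g" using eq by simp
  thus ?thesis using Wg by simp
qed

lemma principle_B:
  assumes howe: "normalized_howe_vector v w \<psi> n V m W" and pi: "irred_whittaker_model v \<psi> n V"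
    and w0: "w \<noteq> 0" and g: "g \<in> GL n" and Wg: "W g \<noteq> 0" and x: "x \<in> Bbarm v w n m"
    and nn: "nn \<in> upper_uni n" and eq: "nn * g = g * x"
  shows "psiN \<psi> n nn = \<psi> 0"
proof -
  have WV: "W \<in> V" using howe by (simp add: normalized_howe_vector_def)
  have xc: "x \<in> carrier_mat n n" using x by (simp add: Bbarm_def lower_borel_def)
  have "W (g * (x * 1\<^sub>m n)) = psiN \<psi> n (1\<^sub>m n) * W g"
    by (rule W_howe[OF howe g x one_Nm[OF w0]])
  moreover have "x * 1\<^sub>m n = x" using xc by simp
  moreover have "W (nn * g) = psiN \<psi> n nn * W g" by (rule W_whit[OF pi WV nn g])
  ultimately have "psiN \<psi> n (1\<^sub>m n) * W g = psiN \<psi> n nn * W g" using eq by simp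
  thus ?thesis using Wg psiN_one[of \<psi> n] by simp
qed

lemma det_nz_of_inv:
  fixes A :: "'a::field mat"
  assumes "A \<in> carrier_mat n n" "B \<in> carrier_mat n n" "A * B = 1\<^sub>m n"
  shows "det A \<noteq> 0"
proof
  assume "det A = 0"
  hence "det (A * B) = 0" using det_mult[OF assms(1,2)] by simp
  thus False using assms(3) by simp
qed

lemma GL_factor:
  fixes A :: "'a::field mat"
  assumes "A * B \<in> GL n" "A \<in> carrier_mat n n" "B \<in> carrier_mat n n"
  shows "A \<in> GL n"
proof -
  have "det (A * B) \<noteq> 0" using assms(1) by (simp add: GL_def)
  hence "det A \<noteq> 0" using det_mult[OF assms(2,3)] by simp
  thus ?thesis using assms(2) by (simp add: GL_def)
qed

definition Ycut :: "'a::field mat \<Rightarrow> nat \<Rightarrow> 'a mat" where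
  "Ycut Y j = mat (dim_row Y) (dim_col Y) (\<lambda>(i,l). if l < j then 0 else Y $$ (i,l))"

lemma Ycut_carrier[simp]: "Y \<in> carrier_mat r r \<Longrightarrow> Ycut Y j \<in> carrier_mat r r"
  by (simp add: Ycut_def)

lemma Ycut_index: "Y \<in> carrier_mat r r \<Longrightarrow> i < r \<Longrightarrow> l < r \<Longrightarrow> Ycut Y j $$ (i,l) = (if l < j then 0 else Y $$ (i,l))"
  by (simp add: Ycut_def)

lemma Ycut0: "Y \<in> carrier_mat r r \<Longrightarrow> Ycut Y 0 = Y"
  by (intro eq_matI) (auto simp: Ycut_def)


lemma step:
  fixes v :: "'a::field \<Rightarrow> int" and \<psi> :: "'a \<Rightarrow> complex" and w :: 'a
    and Y ur :: "'a mat" and a b :: "nat \<Rightarrow> 'a"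
  assumes F: "padic_field v" and w: "w \<noteq> 0" "v w = 1"
    and psi: "add_char_conductor_O v \<psi>"
    and pi: "irred_whittaker_model v \<psi> (2*r+1) V"
    and howe: "normalized_howe_vector v w \<psi> (2*r+1) V m W"
    and m1: "1 \<le> m"
    and a: "\<forall>i\<le>r. a i \<noteq> 0"
    and ur: "ur \<in> carrier_mat r r" and Y: "Y \<in> carrier_mat r r"
    and j: "j < r"
    and nz: "W (Gm r a b ur (Ycut Y j)) \<noteq> 0"
  shows "a j / a (Suc j) \<in> {1 + x |x. x \<in> pideal v (int m)}"
    "\<forall>i<r. Y $$ (i,j) \<in> pideal v (- (int m + 2 * int m * (int r + int j - int i)))"
    "W (Gm r a b ur (Ycut Y j)) = W (Gm r a b ur (Ycut Y (Suc j)))"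
proof -
  let ?n = "2*r+1"
  let ?Yj = "Ycut Y j"
  let ?g = "Gm r a b ur ?Yj"
  have WV: "W \<in> V" using howe by (simp add: normalized_howe_vector_def)
  have Yj: "?Yj \<in> carrier_mat r r" using Y by simp
  have gGL: "?g \<in> GL ?n" by (rule W_vanish[OF pi WV nz])
  obtain gi where gi: "gi \<in> carrier_mat ?n ?n" "gi * ?g = 1\<^sub>m ?n" using GL_inverse[OF gGL] by blast
  have gc: "?g \<in> carrier_mat ?n ?n" by (rule Gm_carrier)
  have colg: "\<And>x. x < ?n \<Longrightarrow> ?g $$ (x, r + j) = (if x = j then a j else 0)"
    by (rule Gm_col[OF ur Yj j]) (use Y j in \<open>auto simp: Ycut_index\<close>)
  have gie: "\<And>q bb. q < ?n \<Longrightarrow> bb \<le> r \<Longrightarrow> gi $$ (q,bb) = zv r a ?Yj bb $ q"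
    using a by (intro inv_entry[OF gc gi zv_carrier Gm_zv[OF ur Yj]]) auto
  have nnform: "\<And>q t. q < ?n \<Longrightarrow>
      mat ?n ?n (\<lambda>(x,y). (if x = y then 1 else 0) + t * ?g $$ (x, r + j) * gi $$ (q,y))
    = mat ?n ?n (\<lambda>(x,y). (if x = y then 1 else 0) + (if x = j then t * a j * gi $$ (q,y) else 0))"
    by (intro eq_matI) (auto simp: colg)
  have conj: "\<And>q t. q < ?n \<Longrightarrow>
      mat ?n ?n (\<lambda>(x,y). (if x = y then 1 else 0) + (if x = j then t * a j * gi $$ (q,y) else 0)) * ?g
      = ?g * tv ?n (r + j) q t"
  proof -
    fix q t assume q: "q < ?n"
    have p: "r + j < ?n" using j by simp
    show "?thesis q t" using conj_tv[OF gc gi p q, of t] nnform[OF q, of t] by simp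
  qed
  have ratio: "a j / a (Suc j) \<in> {1 + x |x. x \<in> pideal v (int m)}"
  proof (rule psi_ratio[OF F psi], intro ballI)
    fix s assume s: "s \<in> pideal v (- int m)"
    let ?q = "r + j + 1"
    let ?f = "\<lambda>y. s * a j * gi $$ (?q,y)"
    have q: "?q < ?n" using j by simp
    have f0: "\<forall>y\<le>j. ?f y = 0"
    proof (intro allI impI)
      fix y assume "y \<le> j"
      thus "?f y = 0" using j by (simp add: gie zv_index)
    qed
    have f1: "?f (j+1) = s * (a j / a (Suc j))"
      using j by (simp add: gie zv_index)
    have jn: "j + 1 < ?n" using j by simp
    have xN: "tv ?n (r + j) ?q s \<in> Nm v w ?n m"
    proof -
      have "tv ?n (r + j) ?q s \<in> Jgrp v w ?n m"
        apply (rule tv_J) using j w(1) apply auto[4]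
        apply (rule pideal_wpow[OF F w s])
        by (simp add: algebra_simps)
      moreover have "tv ?n (r + j) ?q s \<in> upper_uni ?n" using j by (intro tv_upper) auto
      ultimately show ?thesis by (simp add: Nm_def)
    qed
    have "psiN \<psi> ?n (tv ?n (r + j) ?q s) =
          psiN \<psi> ?n (mat ?n ?n (\<lambda>(x,y). (if x = y then 1 else 0) + (if x = j then ?f y else 0)))"
      by (rule principle_N[OF howe pi w(1) gGL nz xN rowmat(1)[OF jn f0] conj[OF q]])
    also have "\<dots> = \<psi> (?f (j+1))" by (rule rowmat(2)[OF jn f0])
    finally show "\<psi> s = \<psi> (s * (a j / a (Suc j)))" using j f1 by (simp add: psiN_tv)
  qed
  show "a j / a (Suc j) \<in> {1 + x |x. x \<in> pideal v (int m)}" by (rule ratio)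
  have cu: "a j / a (Suc j) \<noteq> 0 \<and> v (a j / a (Suc j)) = 0" by (rule unit_of_cong[OF F _ ratio]) (use m1 in simp)
  have colb: "\<forall>i<r. Y $$ (i,j) \<in> pideal v (- (int m + 2 * int m * (int r + int j - int i)))"
  proof (intro allI impI)
    fix i assume i: "i < r"
    let ?k = "int m + 2 * int m * (int r + int j - int i)"
    let ?y = "a j * (- Y $$ (i,j)) / a (Suc j)"
    have "\<forall>t\<in>pideal v ?k. \<psi> (t * ?y) = 1"
    proof
      fix t assume t: "t \<in> pideal v ?k"
      let ?f = "\<lambda>y. t * a j * gi $$ (i,y)"
      have q: "i < ?n" using i by simp
      have f0: "\<forall>y\<le>j. ?f y = 0"
      proof (intro allI impI)
        fix y assume "y \<le> j"
        thus "?f y = 0" using j i Y by (auto simp: gie zv_index Ycut_index)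
      qed
      have f1: "?f (j+1) = t * ?y"
        using j i Y by (simp add: gie zv_index Ycut_index)
      have jn: "j + 1 < ?n" using j by simp
      have xB: "tv ?n (r + j) i t \<in> Bbarm v w ?n m"
      proof -
        have "tv ?n (r + j) i t \<in> Jgrp v w ?n m"
          apply (rule tv_J) using j i w(1) apply auto[4]
          apply (rule pideal_wpow[OF F w t])
          using i by (simp add: algebra_simps)
        moreover have "tv ?n (r + j) i t \<in> lower_borel ?n" using j i by (intro tv_lower) auto
        ultimately show ?thesis by (simp add: Bbarm_def)
      qed
      have "psiN \<psi> ?n (mat ?n ?n (\<lambda>(x,y). (if x = y then 1 else 0) + (if x = j then ?f y else 0))) = \<psi> 0"
        by (rule principle_B[OF howe pi w(1) gGL nz xB rowmat(1)[OF jn f0] conj[OF q]])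
      thus "\<psi> (t * ?y) = 1" using rowmat(2)[OF jn f0] f1 psi0[OF F psi] by simp
    qed
    hence yi: "?y \<in> pideal v (- ?k)" by (rule psi_detect[OF F psi])
    have "Y $$ (i,j) = ?y * (- (a (Suc j) / a j))" using a j by (simp add: field_simps)
    moreover have "?y * (- (a (Suc j) / a j)) \<in> pideal v (- ?k)"
    proof (rule pideal_scale_unit[OF F yi])
      show "- (a (Suc j) / a j) \<noteq> 0" using a j by simp
      have "v (a (Suc j) / a j) = - v (a j / a (Suc j))" using a j by (simp add: vdiv[OF F])
      thus "v (- (a (Suc j) / a j)) = 0" using cu a j by (simp add: vneg[OF F])
    qed
    ultimately show "Y $$ (i,j) \<in> pideal v (- ?k)" by simp
  qed
  show "\<forall>i<r. Y $$ (i,j) \<in> pideal v (- (int m + 2 * int m * (int r + int j - int i)))" by (rule colb)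
  let ?D = "mat r r (\<lambda>(i,l). if l = j then Y $$ (i,j) else 0)"
  let ?Y1 = "Ycut Y (Suc j)"
  have Dc: "?D \<in> carrier_mat r r" by simp
  have Y1: "?Y1 \<in> carrier_mat r r" using Y by simp
  have DY: "?D + ?Y1 = ?Yj"
  proof (rule eq_matI)
    fix i l assume "i < dim_row ?Yj" "l < dim_col ?Yj"
    hence il: "i < r" "l < r" using Yj by auto
    have d1: "dim_row ?Y1 = r" "dim_col ?Y1 = r" using Y1 by auto
    show "(?D + ?Y1) $$ (i,l) = ?Yj $$ (i,l)" using Y il d1 by (cases "l = j") (auto simp: Ycut_index)
  qed (use Yj Y1 in auto)
  have fac: "?g = Gm r a b ur ?Y1 * blk_up r (1\<^sub>m r) ?D"
  proof -
    have "Gm r a b ur ?Y1 * blk_up r (1\<^sub>m r) ?D = Hm r a b * (blk_up r ur (ur * ?Y1) * blk_up r (1\<^sub>m r) ?D)"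
      unfolding Gm_def by (rule assoc_mult_mat[OF Hm_carrier blk_up_carrier blk_up_carrier])
    also have "blk_up r ur (ur * ?Y1) * blk_up r (1\<^sub>m r) ?D = blk_up r (ur * 1\<^sub>m r) (ur * ?D + ur * ?Y1)"
      by (rule blk_up_mult[OF ur mult_carrier_mat[OF ur Y1] one_carrier_mat Dc])
    also have "ur * ?D + ur * ?Y1 = ur * ?Yj"
      using DY mult_add_distrib_mat[OF ur Dc Y1] by simp
    also have "ur * 1\<^sub>m r = ur" using ur by simp
    finally show ?thesis by (simp add: Gm_def)
  qed
  have XN: "blk_up r (1\<^sub>m r) ?D \<in> Nm v w ?n m"
  proof -
    have "blk_up r (1\<^sub>m r) ?D \<in> Jgrp v w ?n m"
    proof (rule blk_up_one_J[OF F w], intro allI impI)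
      fix i l assume "i < r" "l < r"
      thus "?D $$ (i,l) \<in> pideal v (- (int m + 2 * int m * (int r + int l - int i)))"
        using colb by (auto simp: pideal_def)
    qed
    thus ?thesis using blk_up_one_upper by (simp add: Nm_def)
  qed
  have g1GL: "Gm r a b ur ?Y1 \<in> GL ?n"
    by (rule GL_factor[OF _ Gm_carrier blk_up_carrier]) (use gGL fac in simp)
  have "W (Gm r a b ur ?Y1 * (1\<^sub>m ?n * blk_up r (1\<^sub>m r) ?D)) = psiN \<psi> ?n (blk_up r (1\<^sub>m r) ?D) * W (Gm r a b ur ?Y1)"
    by (rule W_howe[OF howe g1GL one_Bbarm[OF w(1)] XN])
  moreover have "1\<^sub>m ?n * blk_up r (1\<^sub>m r) ?D = blk_up r (1\<^sub>m r) ?D" by simp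
  moreover have "psiN \<psi> ?n (blk_up r (1\<^sub>m r) ?D) = 1"
    using psiN_blk_up_one[of \<psi> r ?D] psi0[OF F psi] by simp
  ultimately show "W ?g = W (Gm r a b ur ?Y1)"
    using fac by simp
qed


lemma upper_uni_GL:
  fixes u :: "'a::field mat"
  assumes "u \<in> upper_uni n" shows "u \<in> GL n"
proof -
  have c: "u \<in> carrier_mat n n" using assms by (simp add: upper_uni_def)
  have ut: "upper_triangular u" using assms by (auto simp: upper_uni_def upper_triangular_def)
  have "0 \<notin> set (diag_mat u)" using assms c by (auto simp: upper_uni_def diag_mat_def)
  hence "det u \<noteq> 0" using upper_triangular_imp_det_eq_0_iff[OF c ut] by simp
  thus ?thesis using c by (simp add: GL_def)
qed

lemma diagm_GL:
  fixes f :: "nat \<Rightarrow> 'a::field"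
  assumes "\<forall>i<n. f i \<noteq> 0" shows "diagm n f \<in> GL n"
proof -
  have c: "diagm n f \<in> carrier_mat n n" by simp
  have ut: "upper_triangular (diagm n f)" by (auto simp: upper_triangular_def)
  have "0 \<notin> set (diag_mat (diagm n f))" using assms by (auto simp: diag_mat_def)
  hence "det (diagm n f) \<noteq> 0" using upper_triangular_imp_det_eq_0_iff[OF c ut] by simp
  thus ?thesis using c by (simp add: GL_def)
qed

lemma GL_mult:
  fixes A :: "'a::field mat"
  assumes "A \<in> GL n" "B \<in> GL n" shows "A * B \<in> GL n"
proof -
  have c: "A \<in> carrier_mat n n" "B \<in> carrier_mat n n" using assms by (auto simp: GL_def)
  have "det (A * B) = det A * det B" by (rule det_mult[OF c])
  thus ?thesis using assms c by (auto simp: GL_def)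
qed

lemma m0_false:
  fixes v :: "'a::field \<Rightarrow> int" and \<psi> :: "'a \<Rightarrow> complex" and w :: 'a
  assumes F: "padic_field v" and w: "w \<noteq> 0" "v w = 1"
    and psi: "add_char_conductor_O v \<psi>"
    and pi: "irred_whittaker_model v \<psi> n V"
    and howe: "normalized_howe_vector v w \<psi> n V 0 W"
    and n2: "2 \<le> n"
  shows False
proof -
  have WV: "W \<in> V" using howe by (simp add: normalized_howe_vector_def)
  have W1: "W (1\<^sub>m n) = 1" using howe by (simp add: normalized_howe_vector_def)
  obtain x0 where x0: "x0 \<in> pideal v (-1)" "\<psi> x0 \<noteq> 1"
    using psi unfolding add_char_conductor_O_def by blast
  have psiO: "\<forall>x\<in>pideal v 0. \<psi> x = 1" using psi unfolding add_char_conductor_O_def by blast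
  let ?t0 = "diagm n (\<lambda>i. if i = 0 then w else 1)"
  let ?t0i = "diagm n (\<lambda>i. if i = 0 then inverse w else 1)"
  let ?u0 = "tv n 0 1 (x0 * w)"
  let ?X = "tv n 0 1 x0"
  have n0: "0 < n" "1 < n" using n2 by auto
  have t0GL: "?t0 \<in> GL n" using w by (intro diagm_GL) auto
  have t0iGL: "?t0i \<in> GL n" using w by (intro diagm_GL) auto
  have u0U: "?u0 \<in> upper_uni n" using n0 by (intro tv_upper) auto
  have u0GL: "?u0 \<in> GL n" by (rule upper_uni_GL[OF u0U])
  have oneGL: "1\<^sub>m n \<in> GL n" by (rule upper_uni_GL) (auto simp: upper_uni_def)
  have x0w: "x0 * w \<in> pideal v 0"
  proof -
    have "w \<in> pideal v 1" using w by (simp add: pideal_def)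
    from pideal_mult[OF F x0(1) this] show ?thesis by simp
  qed
  have u0N: "?u0 \<in> Nm v w n 0"
  proof -
    have "?u0 \<in> Jgrp v w n 0" using n0 w x0w by (intro tv_J) auto
    thus ?thesis using u0U by (simp add: Nm_def)
  qed
  have t0B: "?t0 \<in> Bbarm v w n 0"
  proof -
    have wm1: "w - 1 \<in> pideal v 0"
    proof (cases "w - 1 = 0")
      case False
      have "min (v w) (v (-1)) \<le> v (w + (-1))"
        using vultra[OF F, of w "-1"] w False by simp
      thus ?thesis using w vmone[OF F] by (simp add: pideal_def)
    qed (simp add: pideal_def)
    have "?t0 \<in> Jgrp v w n 0" using wm1 by (intro J_mem) (auto simp: w pideal_def)
    moreover have "?t0 \<in> lower_borel n" using w by (auto simp: lower_borel_def)
    ultimately show ?thesis by (simp add: Bbarm_def)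
  qed
  have XE: "?X = ?t0i * ?u0 * ?t0"
  proof (rule eq_matI)
    fix i j assume "i < dim_row (?t0i * ?u0 * ?t0)" "j < dim_col (?t0i * ?u0 * ?t0)"
    hence ij: "i < n" "j < n" by auto
    show "?X $$ (i,j) = (?t0i * ?u0 * ?t0) $$ (i,j)"
      using diag_sandwich[OF tv_carrier ij, of "\<lambda>i. if i = 0 then inverse w else 1" 0 1 "x0 * w" "\<lambda>i. if i = 0 then w else 1"]
        ij w by auto
  qed auto
  have ti: "?t0i * ?t0 = 1\<^sub>m n"
  proof (rule eq_matI)
    fix i j assume "i < dim_row (1\<^sub>m n :: 'a mat)" "j < dim_col (1\<^sub>m n :: 'a mat)"
    hence ij: "i < n" "j < n" by auto
    show "(?t0i * ?t0) $$ (i,j) = 1\<^sub>m n $$ (i,j)"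
      using diagm_mult_right[OF diagm_carrier ij, of "\<lambda>i. if i = 0 then inverse w else 1" "\<lambda>i. if i = 0 then w else 1"]
        ij w by auto
  qed auto
  have "W (?X * 1\<^sub>m n) = psiN \<psi> n ?X * W (1\<^sub>m n)"
    by (rule W_whit[OF pi WV _ oneGL]) (use n0 in \<open>intro tv_upper, auto\<close>)
  hence WX: "W ?X = \<psi> x0" using W1 n0 psiN_tv[of 0 n \<psi> 1 x0] by simp
  have g1: "?t0i * ?u0 \<in> GL n" by (rule GL_mult[OF t0iGL u0GL])
  have "W ((?t0i * ?u0) * (?t0 * 1\<^sub>m n)) = psiN \<psi> n (1\<^sub>m n) * W (?t0i * ?u0)"
    by (rule W_howe[OF howe g1 t0B one_Nm[OF w(1)]])
  hence e1: "W ?X = W (?t0i * ?u0)" using XE psiN_one[of \<psi> n] psi0[OF F psi] by simp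
  have "W (?t0i * (1\<^sub>m n * ?u0)) = psiN \<psi> n ?u0 * W ?t0i"
    by (rule W_howe[OF howe t0iGL one_Bbarm[OF w(1)] u0N])
  hence e2: "W (?t0i * ?u0) = W ?t0i" using psiN_tv[of 0 n \<psi> 1 "x0 * w"] n0 psiO x0w by simp
  have "W (?t0i * (?t0 * 1\<^sub>m n)) = psiN \<psi> n (1\<^sub>m n) * W ?t0i"
    by (rule W_howe[OF howe t0iGL t0B one_Nm[OF w(1)]])
  hence e3: "W ?t0i = 1" using ti W1 psiN_one[of \<psi> n] psi0[OF F psi] by simp
  show False using WX e1 e2 e3 x0(2) by simp
qed

theorem proposition3p4:
  fixes v :: "'a::field \<Rightarrow> int" and \<psi> :: "'a \<Rightarrow> complex" and unif_w :: 'a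
    and r n m :: nat and V :: "('a mat \<Rightarrow> complex) set" and W :: "'a mat \<Rightarrow> complex"
    and a a' b :: "nat \<Rightarrow> 'a" and ur u :: "'a mat"
  assumes F: "padic_field v"
    and unif: "unif_w \<noteq> 0" "v unif_w = 1"
    and psi: "add_char_conductor_O v \<psi>"
    and n: "n = 2 * r + 1"
    and pi: "irred_whittaker_model v \<psi> n V" "unitarizable n V"
    and howe: "normalized_howe_vector v unif_w \<psi> n V m W"
    and a: "\<forall>i\<le>r. a i \<noteq> 0"
    and a': "\<forall>i<r. a' i \<noteq> 0"
    and b: "\<forall>i<r. b i \<noteq> 0"
    and ur: "ur \<in> upper_uni r" and u: "u \<in> upper_uni r"
    and nz: "W (blk_anti r (diagm (r+1) a) (diagm r b * omega r)
                 * blk_up r ur (ur * omega r * diagm r a' * u)) \<noteq> 0"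
  shows "(\<forall>i<r. a i / a (Suc i) \<in> {1 + x | x. x \<in> pideal v (int m)}) \<and>
         blk_up r (1\<^sub>m r) (omega r * diagm r a' * u) \<in> Jgrp v unif_w n m \<and>
         W (blk_anti r (diagm (r+1) a) (diagm r b * omega r)
              * blk_up r ur (ur * omega r * diagm r a' * u))
         = W (blk_anti r (diagm (r+1) a) (diagm r b * omega r) * blk_up r ur (0\<^sub>m r r))"
proof (cases "r = 0")
  case True
  have J: "blk_up r (1\<^sub>m r) (omega r * diagm r a' * u) \<in> Jgrp v unif_w n m"
    unfolding n using True unif by (intro J_mem blk_up_carrier) (auto simp: blk_up_index pideal_def)
  have E: "blk_up r ur (ur * omega r * diagm r a' * u) = blk_up r ur (0\<^sub>m r r)"
    using True by (simp add: blk_up_def)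
  show ?thesis using True J E by simp
next
  case rpos: False
  show ?thesis
  proof (cases "m = 0")
    case True
    have "False"
      by (rule m0_false[OF F unif psi pi(1) howe[unfolded True]]) (use n rpos in simp)
    thus ?thesis ..
  next
    case mpos: False
    hence m1: "1 \<le> m" by simp
    have urc: "ur \<in> carrier_mat r r" using ur by (simp add: upper_uni_def)
    have uc: "u \<in> carrier_mat r r" using u by (simp add: upper_uni_def)
    define Y where "Y = omega r * diagm r a' * u"
    have Yc: "Y \<in> carrier_mat r r" unfolding Y_def
      by (intro mult_carrier_mat[OF mult_carrier_mat[OF omega_carrier diagm_carrier] uc])
    have urY: "ur * omega r * diagm r a' * u = ur * Y"
    proof -
      have "ur * omega r * diagm r a' = ur * (omega r * diagm r a')"
        by (rule assoc_mult_mat[OF urc omega_carrier diagm_carrier])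
      hence "ur * omega r * diagm r a' * u = ur * (omega r * diagm r a') * u" by simp
      also have "\<dots> = ur * (omega r * diagm r a' * u)"
        by (rule assoc_mult_mat[OF urc mult_carrier_mat[OF omega_carrier diagm_carrier] uc])
      finally show ?thesis by (simp add: Y_def)
    qed
    have g0: "blk_anti r (diagm (r+1) a) (diagm r b * omega r) * blk_up r ur (ur * omega r * diagm r a' * u)
        = Gm r a b ur Y" by (simp add: Gm_def Hm_def urY)
    have howe': "normalized_howe_vector v unif_w \<psi> (2*r+1) V m W" using howe n by simp
    have pi': "irred_whittaker_model v \<psi> (2*r+1) V" using pi n by simp
    have nzG: "W (Gm r a b ur Y) \<noteq> 0" using nz g0 by simp
    have chain: "\<forall>j\<le>r. W (Gm r a b ur (Ycut Y j)) = W (Gm r a b ur Y)"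
    proof (intro allI impI)
      fix j assume "j \<le> r"
      thus "W (Gm r a b ur (Ycut Y j)) = W (Gm r a b ur Y)"
      proof (induction j)
        case 0 thus ?case using Ycut0[OF Yc] by simp
      next
        case (Suc j)
        hence jr: "j < r" and IH: "W (Gm r a b ur (Ycut Y j)) = W (Gm r a b ur Y)" by auto
        have "W (Gm r a b ur (Ycut Y j)) \<noteq> 0" using IH nzG by simp
        from step(3)[OF F unif psi pi' howe' m1 a urc Yc jr this] IH show ?case by simp
      qed
    qed
    have stepj: "\<And>j. j < r \<Longrightarrow> a j / a (Suc j) \<in> {1 + x |x. x \<in> pideal v (int m)} \<and>
        (\<forall>i<r. Y $$ (i,j) \<in> pideal v (- (int m + 2 * int m * (int r + int j - int i))))"
    proof -
      fix j assume jr: "j < r"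
      have "W (Gm r a b ur (Ycut Y j)) \<noteq> 0" using chain jr nzG by simp
      from step(1,2)[OF F unif psi pi' howe' m1 a urc Yc jr this]
      show "?thesis j" by blast
    qed
    have c1: "\<forall>i<r. a i / a (Suc i) \<in> {1 + x | x. x \<in> pideal v (int m)}" using stepj by blast
    have XJ: "blk_up r (1\<^sub>m r) Y \<in> Jgrp v unif_w (2*r+1) m"
      by (rule blk_up_one_J[OF F unif]) (use stepj in blast)
    have XN: "blk_up r (1\<^sub>m r) Y \<in> Nm v unif_w (2*r+1) m"
      using XJ blk_up_one_upper by (simp add: Nm_def)
    let ?g1 = "Hm r a b * blk_up r ur (0\<^sub>m r r)"
    have fac: "Gm r a b ur Y = ?g1 * blk_up r (1\<^sub>m r) Y"
    proof -
      have "?g1 * blk_up r (1\<^sub>m r) Y = Hm r a b * (blk_up r ur (0\<^sub>m r r) * blk_up r (1\<^sub>m r) Y)"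
        by (rule assoc_mult_mat[OF Hm_carrier blk_up_carrier blk_up_carrier])
      also have "blk_up r ur (0\<^sub>m r r) * blk_up r (1\<^sub>m r) Y = blk_up r (ur * 1\<^sub>m r) (ur * Y + 0\<^sub>m r r)"
        by (rule blk_up_mult[OF urc zero_carrier_mat one_carrier_mat Yc])
      also have "ur * Y + 0\<^sub>m r r = ur * Y"
        by (rule right_add_zero_mat[OF mult_carrier_mat[OF urc Yc]])
      also have "ur * 1\<^sub>m r = ur" using urc by simp
      finally show ?thesis by (simp add: Gm_def)
    qed
    have GGL: "Gm r a b ur Y \<in> GL (2*r+1)"
    proof -
      have WV: "W \<in> V" using howe by (simp add: normalized_howe_vector_def)
      show ?thesis by (rule W_vanish[OF pi' WV nzG])
    qed
    have g1GL: "?g1 \<in> GL (2*r+1)"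
      by (rule GL_factor[OF _ mult_carrier_mat[OF Hm_carrier blk_up_carrier] blk_up_carrier]) (use GGL fac in simp)
    have "W (?g1 * (1\<^sub>m (2*r+1) * blk_up r (1\<^sub>m r) Y)) = psiN \<psi> (2*r+1) (blk_up r (1\<^sub>m r) Y) * W ?g1"
      by (rule W_howe[OF howe' g1GL one_Bbarm[OF unif(1)] XN])
    moreover have "1\<^sub>m (2*r+1) * blk_up r (1\<^sub>m r) Y = blk_up r (1\<^sub>m r) Y" by simp
    moreover have "psiN \<psi> (2*r+1) (blk_up r (1\<^sub>m r) Y) = 1"
      using psiN_blk_up_one[of \<psi> r Y] psi0[OF F psi] by simp
    ultimately have c3: "W (Gm r a b ur Y) = W ?g1" using fac by simp
    show ?thesis using c1 XJ c3 g0 n by (simp add: Y_def Hm_def)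
  qed
qed


end
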